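(* Let $n=3$, $I_1=\{1,2\}$, $I_2=\{1,3\}$, and $f=f_1+f_2$ with $$f_1=8+\tfrac12x_1^2x_2^4+(x_1^2-2x_1^3)x_2^3+(2x_1+10x_1^2+4x_1^3+3x_1^4)x_2^2+4(x_1-2x_1^2)x_2,\qquad f_2=x_1^2x_3^2.$$ Then $f$ is nonnegative on $\mathbb R^3$, there are no $\sigma_1\in\Sigma[x(I_1)]$, $\sigma_2\in\Sigma[x(I_2)]$ with $f=\sigma_1+\sigma_2$, but there exist $\sigma_1\in\Sigma[x(I_1)]_7$, $\sigma_2\in\Sigma[x(I_2)]_7$ with $$f=\frac{\sigma_1}{\Theta_1^2}+\frac{\sigma_2}{\Theta_2^2},\qquad \Theta_1=(x_1^2+x_2^2+1)(x_1^2+1),\ \Theta_2=(x_1^2+x_3^2+1)(x_1^2+1).$$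
   Context: For $T\subseteq\{1,\dots,n\}$, $x(T)=(x_i)_{i\in T}$; $\Sigma[x(T)]$ is the set of sums of squares of polynomials in the variables $x(T)$, and $\Sigma[x(T)]_t$ those sums of squares of polynomials of degree at most $t$. *)

theory Defs
  imports Complex_Main
begin

text \<open>Real polynomials in two variables, represented by their polynomial functions
  (a real polynomial is determined by its function). poly2_deg t p: p is a
  polynomial of total degree at most t.\<close>
definition poly2_deg :: "nat \<Rightarrow> (real \<Rightarrow> real \<Rightarrow> real) \<Rightarrow> bool" where
  "poly2_deg t p \<longleftrightarrow>
     (\<exists>c :: nat \<Rightarrow> nat \<Rightarrow> real. \<forall>x y. p x y = (\<Sum>a\<le>t. \<Sum>b\<le>t - a. c a b * x ^ a * y ^ b))"

text \<open>Sigma[x(T)]_t for |T| = 2: sums of squares of polynomials of degree at most t.\<close>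
definition sos2_deg :: "nat \<Rightarrow> (real \<Rightarrow> real \<Rightarrow> real) \<Rightarrow> bool" where
  "sos2_deg t s \<longleftrightarrow>
     (\<exists>(m::nat) (ps :: nat \<Rightarrow> real \<Rightarrow> real \<Rightarrow> real).
        (\<forall>j<m. poly2_deg t (ps j)) \<and> (\<forall>x y. s x y = (\<Sum>j<m. (ps j x y)^2)))"

definition sos2 :: "(real \<Rightarrow> real \<Rightarrow> real) \<Rightarrow> bool" where
  "sos2 s \<longleftrightarrow> (\<exists>t. sos2_deg t s)"

definition f1 :: "real \<Rightarrow> real \<Rightarrow> real" where
  "f1 x1 x2 = 8 + (1/2) * x1^2 * x2^4 + (x1^2 - 2 * x1^3) * x2^3
     + (2 * x1 + 10 * x1^2 + 4 * x1^3 + 3 * x1^4) * x2^2 + 4 * (x1 - 2 * x1^2) * x2"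

definition f2 :: "real \<Rightarrow> real \<Rightarrow> real" where
  "f2 x1 x3 = x1^2 * x3^2"

definition f :: "real \<Rightarrow> real \<Rightarrow> real \<Rightarrow> real" where
  "f x1 x2 x3 = f1 x1 x2 + f2 x1 x3"

definition Theta1 :: "real \<Rightarrow> real \<Rightarrow> real" where
  "Theta1 x1 x2 = (x1^2 + x2^2 + 1) * (x1^2 + 1)"

definition Theta2 :: "real \<Rightarrow> real \<Rightarrow> real" where
  "Theta2 x1 x3 = (x1^2 + x3^2 + 1) * (x1^2 + 1)"

end

theory Submission
  imports Defs "HOL-Computational_Algebra.Polynomial"
begin


lemma poly2_deg_cong: "(\<And>x y. p x y = q x y) \<Longrightarrow> poly2_deg t q \<Longrightarrow> poly2_deg t p"
  unfolding poly2_deg_def by presburger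

lemma poly2_deg_add: "poly2_deg t p \<Longrightarrow> poly2_deg t q \<Longrightarrow> poly2_deg t (\<lambda>x y. p x y + q x y)"
proof -
  assume "poly2_deg t p" "poly2_deg t q"
  then obtain c1 c2 where c1: "\<forall>x y. p x y = (\<Sum>a\<le>t. \<Sum>b\<le>t - a. c1 a b * x ^ a * y ^ b)"
    and c2: "\<forall>x y. q x y = (\<Sum>a\<le>t. \<Sum>b\<le>t - a. c2 a b * x ^ a * y ^ b)"
    unfolding poly2_deg_def by blast
  show ?thesis unfolding poly2_deg_def
    by (rule exI[where x="\<lambda>a b. c1 a b + c2 a b"]) (simp add: c1 c2 sum.distrib[symmetric] distrib_right)
qed

lemma poly2_deg_scale: "poly2_deg t p \<Longrightarrow> poly2_deg t (\<lambda>x y. k * p x y)"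
proof -
  assume "poly2_deg t p"
  then obtain c1 where c1: "\<forall>x y. p x y = (\<Sum>a\<le>t. \<Sum>b\<le>t - a. c1 a b * x ^ a * y ^ b)"
    unfolding poly2_deg_def by blast
  show ?thesis unfolding poly2_deg_def
    by (rule exI[where x="\<lambda>a b. k * c1 a b"]) (simp add: c1 sum_distrib_left mult.assoc)
qed

lemma poly2_deg_mon: "a + b \<le> t \<Longrightarrow> poly2_deg t (\<lambda>x y. k * x ^ a * y ^ b)"
proof -
  assume h: "a + b \<le> t"
  have "\<forall>x y. k * x ^ a * y ^ b = (\<Sum>a'\<le>t. \<Sum>b'\<le>t - a'. (if a' = a \<and> b' = b then k else 0) * x ^ a' * y ^ b')"
  proof (intro allI)
    fix x y :: real
    have inner: "(\<Sum>b'\<le>t - a'. (if a' = a \<and> b' = b then k else 0) * x ^ a' * y ^ b')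
        = (if a' = a then k * x ^ a * y ^ b else 0)" for a'
    proof (cases "a' = a")
      case True
      have "(\<Sum>b'\<le>t - a'. (if a' = a \<and> b' = b then k else 0) * x ^ a' * y ^ b')
          = (\<Sum>b'\<le>t - a. (if b' = b then k * x ^ a * y ^ b else 0))"
        using True by (intro sum.cong) auto
      also have "\<dots> = k * x ^ a * y ^ b" using h by (simp add: le_diff_conv2)
      finally show ?thesis using True by simp
    qed simp
    have "(\<Sum>a'\<le>t. \<Sum>b'\<le>t - a'. (if a' = a \<and> b' = b then k else 0) * x ^ a' * y ^ b')
        = (\<Sum>a'\<le>t. (if a' = a then k * x ^ a * y ^ b else 0))"
      by (simp only: inner)
    also have "\<dots> = k * x ^ a * y ^ b" using h by simp
    finally show "k * x ^ a * y ^ b = (\<Sum>a'\<le>t. \<Sum>b'\<le>t - a'. (if a' = a \<and> b' = b then k else 0) * x ^ a' * y ^ b')" by simp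
  qed
  then show ?thesis unfolding poly2_deg_def by (rule exI[where x="\<lambda>a' b'. if a' = a \<and> b' = b then k else 0"])
qed



definition g0 :: "real \<Rightarrow> real \<Rightarrow> real" where
  "g0 x y = (1) * x ^ 0 * y ^ 0 + (1/4) * x ^ 1 * y ^ 1 + (1/8) * x ^ 1 * y ^ 2 + (21/40) * x ^ 2 * y ^ 1 + (-1/25) * x ^ 2 * y ^ 2 + (3/10) * x ^ 3 * y ^ 1"

definition g1 :: "real \<Rightarrow> real \<Rightarrow> real" where
  "g1 x y = (1) * x ^ 1 * y ^ 0 + (-41/40) * x ^ 1 * y ^ 1 + (-11/400) * x ^ 1 * y ^ 2 + (-1/20) * x ^ 2 * y ^ 1 + (19/80) * x ^ 2 * y ^ 2 + (-1/2) * x ^ 3 * y ^ 1"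

definition g2 :: "real \<Rightarrow> real \<Rightarrow> real" where
  "g2 x y = (1) * x ^ 1 * y ^ 1 + (49/4350) * x ^ 1 * y ^ 2 + (-24/145) * x ^ 2 * y ^ 1 + (-1/30) * x ^ 2 * y ^ 2 + (-4/261) * x ^ 3 * y ^ 1"

definition g3 :: "real \<Rightarrow> real \<Rightarrow> real" where
  "g3 x y = (1) * x ^ 1 * y ^ 2 + (47520/30841) * x ^ 2 * y ^ 1 + (101210/400933) * x ^ 2 * y ^ 2 + (621100/1202799) * x ^ 3 * y ^ 1"

definition g4 :: "real \<Rightarrow> real \<Rightarrow> real" where
  "g4 x y = (1) * x ^ 2 * y ^ 1 + (703389/46892285) * x ^ 2 * y ^ 2 + (4462404/9378457) * x ^ 3 * y ^ 1"

definition g5 :: "real \<Rightarrow> real \<Rightarrow> real" where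
  "g5 x y = (1) * x ^ 2 * y ^ 2 + (-248206900/363049647) * x ^ 3 * y ^ 1"

definition g6 :: "real \<Rightarrow> real \<Rightarrow> real" where
  "g6 x y = (1) * x ^ 3 * y ^ 1"

lemma f1_sos: "f1 x y * (x^2 + 1) = (8) * (g0 x y)^2 + (8) * (g1 x y)^2 + (87/40) * (g2 x y)^2 + (400933/1087500) * (g3 x y)^2 + (9378457/18504600) * (g4 x y)^2 + (121016549/12191994100) * (g5 x y)^2 + (67310167/1089148941) * (g6 x y)^2"
  unfolding f1_def g0_def g1_def g2_def g3_def g4_def g5_def g6_def
  by algebra

lemma pd_0a: "poly2_deg 7 (\<lambda>x y. g0 x y * (x^2+y^2+1) * x)"
  apply (rule poly2_deg_cong[where q="\<lambda>x y. (1) * x ^ 1 * y ^ 0 + (1) * x ^ 1 * y ^ 2 + (1/4) * x ^ 2 * y ^ 1 + (1/8) * x ^ 2 * y ^ 2 + (1/4) * x ^ 2 * y ^ 3 + (1/8) * x ^ 2 * y ^ 4 + (1) * x ^ 3 * y ^ 0 + (21/40) * x ^ 3 * y ^ 1 + (-1/25) * x ^ 3 * y ^ 2 + (21/40) * x ^ 3 * y ^ 3 + (-1/25) * x ^ 3 * y ^ 4 + (11/20) * x ^ 4 * y ^ 1 + (1/8) * x ^ 4 * y ^ 2 + (3/10) * x ^ 4 * y ^ 3 + (21/40) * x ^ 5 * y ^ 1 + (-1/25) * x ^ 5 * y ^ 2 + (3/10) * x ^ 6 * y ^ 1"])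
   apply (unfold g0_def, algebra)
  by (intro poly2_deg_add poly2_deg_mon; simp)

lemma pd_0b: "poly2_deg 7 (\<lambda>x y. g0 x y * (x^2+y^2+1))"
  apply (rule poly2_deg_cong[where q="\<lambda>x y. (1) * x ^ 0 * y ^ 0 + (1) * x ^ 0 * y ^ 2 + (1/4) * x ^ 1 * y ^ 1 + (1/8) * x ^ 1 * y ^ 2 + (1/4) * x ^ 1 * y ^ 3 + (1/8) * x ^ 1 * y ^ 4 + (1) * x ^ 2 * y ^ 0 + (21/40) * x ^ 2 * y ^ 1 + (-1/25) * x ^ 2 * y ^ 2 + (21/40) * x ^ 2 * y ^ 3 + (-1/25) * x ^ 2 * y ^ 4 + (11/20) * x ^ 3 * y ^ 1 + (1/8) * x ^ 3 * y ^ 2 + (3/10) * x ^ 3 * y ^ 3 + (21/40) * x ^ 4 * y ^ 1 + (-1/25) * x ^ 4 * y ^ 2 + (3/10) * x ^ 5 * y ^ 1"])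
   apply (unfold g0_def, algebra)
  by (intro poly2_deg_add poly2_deg_mon; simp)

lemma pd_1a: "poly2_deg 7 (\<lambda>x y. g1 x y * (x^2+y^2+1) * x)"
  apply (rule poly2_deg_cong[where q="\<lambda>x y. (1) * x ^ 2 * y ^ 0 + (-41/40) * x ^ 2 * y ^ 1 + (389/400) * x ^ 2 * y ^ 2 + (-41/40) * x ^ 2 * y ^ 3 + (-11/400) * x ^ 2 * y ^ 4 + (-1/20) * x ^ 3 * y ^ 1 + (19/80) * x ^ 3 * y ^ 2 + (-1/20) * x ^ 3 * y ^ 3 + (19/80) * x ^ 3 * y ^ 4 + (1) * x ^ 4 * y ^ 0 + (-61/40) * x ^ 4 * y ^ 1 + (-11/400) * x ^ 4 * y ^ 2 + (-1/2) * x ^ 4 * y ^ 3 + (-1/20) * x ^ 5 * y ^ 1 + (19/80) * x ^ 5 * y ^ 2 + (-1/2) * x ^ 6 * y ^ 1"])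
   apply (unfold g1_def, algebra)
  by (intro poly2_deg_add poly2_deg_mon; simp)

lemma pd_1b: "poly2_deg 7 (\<lambda>x y. g1 x y * (x^2+y^2+1))"
  apply (rule poly2_deg_cong[where q="\<lambda>x y. (1) * x ^ 1 * y ^ 0 + (-41/40) * x ^ 1 * y ^ 1 + (389/400) * x ^ 1 * y ^ 2 + (-41/40) * x ^ 1 * y ^ 3 + (-11/400) * x ^ 1 * y ^ 4 + (-1/20) * x ^ 2 * y ^ 1 + (19/80) * x ^ 2 * y ^ 2 + (-1/20) * x ^ 2 * y ^ 3 + (19/80) * x ^ 2 * y ^ 4 + (1) * x ^ 3 * y ^ 0 + (-61/40) * x ^ 3 * y ^ 1 + (-11/400) * x ^ 3 * y ^ 2 + (-1/2) * x ^ 3 * y ^ 3 + (-1/20) * x ^ 4 * y ^ 1 + (19/80) * x ^ 4 * y ^ 2 + (-1/2) * x ^ 5 * y ^ 1"])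
   apply (unfold g1_def, algebra)
  by (intro poly2_deg_add poly2_deg_mon; simp)

lemma pd_2a: "poly2_deg 7 (\<lambda>x y. g2 x y * (x^2+y^2+1) * x)"
  apply (rule poly2_deg_cong[where q="\<lambda>x y. (1) * x ^ 2 * y ^ 1 + (49/4350) * x ^ 2 * y ^ 2 + (1) * x ^ 2 * y ^ 3 + (49/4350) * x ^ 2 * y ^ 4 + (-24/145) * x ^ 3 * y ^ 1 + (-1/30) * x ^ 3 * y ^ 2 + (-24/145) * x ^ 3 * y ^ 3 + (-1/30) * x ^ 3 * y ^ 4 + (257/261) * x ^ 4 * y ^ 1 + (49/4350) * x ^ 4 * y ^ 2 + (-4/261) * x ^ 4 * y ^ 3 + (-24/145) * x ^ 5 * y ^ 1 + (-1/30) * x ^ 5 * y ^ 2 + (-4/261) * x ^ 6 * y ^ 1"])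
   apply (unfold g2_def, algebra)
  by (intro poly2_deg_add poly2_deg_mon; simp)

lemma pd_2b: "poly2_deg 7 (\<lambda>x y. g2 x y * (x^2+y^2+1))"
  apply (rule poly2_deg_cong[where q="\<lambda>x y. (1) * x ^ 1 * y ^ 1 + (49/4350) * x ^ 1 * y ^ 2 + (1) * x ^ 1 * y ^ 3 + (49/4350) * x ^ 1 * y ^ 4 + (-24/145) * x ^ 2 * y ^ 1 + (-1/30) * x ^ 2 * y ^ 2 + (-24/145) * x ^ 2 * y ^ 3 + (-1/30) * x ^ 2 * y ^ 4 + (257/261) * x ^ 3 * y ^ 1 + (49/4350) * x ^ 3 * y ^ 2 + (-4/261) * x ^ 3 * y ^ 3 + (-24/145) * x ^ 4 * y ^ 1 + (-1/30) * x ^ 4 * y ^ 2 + (-4/261) * x ^ 5 * y ^ 1"])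
   apply (unfold g2_def, algebra)
  by (intro poly2_deg_add poly2_deg_mon; simp)

lemma pd_3a: "poly2_deg 7 (\<lambda>x y. g3 x y * (x^2+y^2+1) * x)"
  apply (rule poly2_deg_cong[where q="\<lambda>x y. (1) * x ^ 2 * y ^ 2 + (1) * x ^ 2 * y ^ 4 + (47520/30841) * x ^ 3 * y ^ 1 + (101210/400933) * x ^ 3 * y ^ 2 + (47520/30841) * x ^ 3 * y ^ 3 + (101210/400933) * x ^ 3 * y ^ 4 + (621100/1202799) * x ^ 4 * y ^ 1 + (1) * x ^ 4 * y ^ 2 + (621100/1202799) * x ^ 4 * y ^ 3 + (47520/30841) * x ^ 5 * y ^ 1 + (101210/400933) * x ^ 5 * y ^ 2 + (621100/1202799) * x ^ 6 * y ^ 1"])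
   apply (unfold g3_def, algebra)
  by (intro poly2_deg_add poly2_deg_mon; simp)

lemma pd_3b: "poly2_deg 7 (\<lambda>x y. g3 x y * (x^2+y^2+1))"
  apply (rule poly2_deg_cong[where q="\<lambda>x y. (1) * x ^ 1 * y ^ 2 + (1) * x ^ 1 * y ^ 4 + (47520/30841) * x ^ 2 * y ^ 1 + (101210/400933) * x ^ 2 * y ^ 2 + (47520/30841) * x ^ 2 * y ^ 3 + (101210/400933) * x ^ 2 * y ^ 4 + (621100/1202799) * x ^ 3 * y ^ 1 + (1) * x ^ 3 * y ^ 2 + (621100/1202799) * x ^ 3 * y ^ 3 + (47520/30841) * x ^ 4 * y ^ 1 + (101210/400933) * x ^ 4 * y ^ 2 + (621100/1202799) * x ^ 5 * y ^ 1"])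
   apply (unfold g3_def, algebra)
  by (intro poly2_deg_add poly2_deg_mon; simp)

lemma pd_4a: "poly2_deg 7 (\<lambda>x y. g4 x y * (x^2+y^2+1) * x)"
  apply (rule poly2_deg_cong[where q="\<lambda>x y. (1) * x ^ 3 * y ^ 1 + (703389/46892285) * x ^ 3 * y ^ 2 + (1) * x ^ 3 * y ^ 3 + (703389/46892285) * x ^ 3 * y ^ 4 + (4462404/9378457) * x ^ 4 * y ^ 1 + (4462404/9378457) * x ^ 4 * y ^ 3 + (1) * x ^ 5 * y ^ 1 + (703389/46892285) * x ^ 5 * y ^ 2 + (4462404/9378457) * x ^ 6 * y ^ 1"])
   apply (unfold g4_def, algebra)
  by (intro poly2_deg_add poly2_deg_mon; simp)

lemma pd_4b: "poly2_deg 7 (\<lambda>x y. g4 x y * (x^2+y^2+1))"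
  apply (rule poly2_deg_cong[where q="\<lambda>x y. (1) * x ^ 2 * y ^ 1 + (703389/46892285) * x ^ 2 * y ^ 2 + (1) * x ^ 2 * y ^ 3 + (703389/46892285) * x ^ 2 * y ^ 4 + (4462404/9378457) * x ^ 3 * y ^ 1 + (4462404/9378457) * x ^ 3 * y ^ 3 + (1) * x ^ 4 * y ^ 1 + (703389/46892285) * x ^ 4 * y ^ 2 + (4462404/9378457) * x ^ 5 * y ^ 1"])
   apply (unfold g4_def, algebra)
  by (intro poly2_deg_add poly2_deg_mon; simp)

lemma pd_5a: "poly2_deg 7 (\<lambda>x y. g5 x y * (x^2+y^2+1) * x)"
  apply (rule poly2_deg_cong[where q="\<lambda>x y. (1) * x ^ 3 * y ^ 2 + (1) * x ^ 3 * y ^ 4 + (-248206900/363049647) * x ^ 4 * y ^ 1 + (-248206900/363049647) * x ^ 4 * y ^ 3 + (1) * x ^ 5 * y ^ 2 + (-248206900/363049647) * x ^ 6 * y ^ 1"])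
   apply (unfold g5_def, algebra)
  by (intro poly2_deg_add poly2_deg_mon; simp)

lemma pd_5b: "poly2_deg 7 (\<lambda>x y. g5 x y * (x^2+y^2+1))"
  apply (rule poly2_deg_cong[where q="\<lambda>x y. (1) * x ^ 2 * y ^ 2 + (1) * x ^ 2 * y ^ 4 + (-248206900/363049647) * x ^ 3 * y ^ 1 + (-248206900/363049647) * x ^ 3 * y ^ 3 + (1) * x ^ 4 * y ^ 2 + (-248206900/363049647) * x ^ 5 * y ^ 1"])
   apply (unfold g5_def, algebra)
  by (intro poly2_deg_add poly2_deg_mon; simp)

lemma pd_6a: "poly2_deg 7 (\<lambda>x y. g6 x y * (x^2+y^2+1) * x)"
  apply (rule poly2_deg_cong[where q="\<lambda>x y. (1) * x ^ 4 * y ^ 1 + (1) * x ^ 4 * y ^ 3 + (1) * x ^ 6 * y ^ 1"])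
   apply (unfold g6_def, algebra)
  by (intro poly2_deg_add poly2_deg_mon; simp)

lemma pd_6b: "poly2_deg 7 (\<lambda>x y. g6 x y * (x^2+y^2+1))"
  apply (rule poly2_deg_cong[where q="\<lambda>x y. (1) * x ^ 3 * y ^ 1 + (1) * x ^ 3 * y ^ 3 + (1) * x ^ 5 * y ^ 1"])
   apply (unfold g6_def, algebra)
  by (intro poly2_deg_add poly2_deg_mon; simp)


definition PL :: "(real \<Rightarrow> real \<Rightarrow> real) list" where
  "PL = [\<lambda>x y. sqrt (8) * (g0 x y * (x^2+y^2+1) * x), \<lambda>x y. sqrt (8) * (g0 x y * (x^2+y^2+1)), \<lambda>x y. sqrt (8) * (g1 x y * (x^2+y^2+1) * x), \<lambda>x y. sqrt (8) * (g1 x y * (x^2+y^2+1)), \<lambda>x y. sqrt (87/40) * (g2 x y * (x^2+y^2+1) * x), \<lambda>x y. sqrt (87/40) * (g2 x y * (x^2+y^2+1)), \<lambda>x y. sqrt (400933/1087500) * (g3 x y * (x^2+y^2+1) * x), \<lambda>x y. sqrt (400933/1087500) * (g3 x y * (x^2+y^2+1)), \<lambda>x y. sqrt (9378457/18504600) * (g4 x y * (x^2+y^2+1) * x), \<lambda>x y. sqrt (9378457/18504600) * (g4 x y * (x^2+y^2+1)), \<lambda>x y. sqrt (121016549/12191994100) * (g5 x y * (x^2+y^2+1) * x), \<lambda>x y. sqrt (121016549/12191994100) * (g5 x y * (x^2+y^2+1)), \<lambda>x y. sqrt (67310167/1089148941) * (g6 x y * (x^2+y^2+1) * x), \<lambda>x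 y. sqrt (67310167/1089148941) * (g6 x y * (x^2+y^2+1))]"

lemma PL_deg: "\<forall>p\<in>set PL. poly2_deg 7 p"
  unfolding PL_def by (simp add: pd_0a pd_0b pd_1a pd_1b pd_2a pd_2b pd_3a pd_3b pd_4a pd_4b pd_5a pd_5b pd_6a pd_6b poly2_deg_scale)

lemma sq_pair: "d \<ge> 0 \<Longrightarrow> (sqrt d * (G * W * x))^2 + (sqrt d * (G * W))^2 = d * G^2 * (W^2 * (x^2 + 1))"
  by (simp add: power_mult_distrib algebra_simps)

lemma s1_sum: "f1 x y * (Theta1 x y)^2 = sum_list (map (\<lambda>p. (p x y)^2) PL)"
proof -
  have "f1 x y * (Theta1 x y)^2 = (f1 x y * (x^2+1)) * ((x^2+y^2+1)^2 * (x^2+1))"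
    unfolding Theta1_def by (simp add: power_mult_distrib power2_eq_square)
  also have "\<dots> = ((8) * (g0 x y)^2 + (8) * (g1 x y)^2 + (87/40) * (g2 x y)^2 + (400933/1087500) * (g3 x y)^2 + (9378457/18504600) * (g4 x y)^2 + (121016549/12191994100) * (g5 x y)^2 + (67310167/1089148941) * (g6 x y)^2) * ((x^2+y^2+1)^2 * (x^2+1))"
    by (simp only: f1_sos)
  also have "\<dots> = sum_list (map (\<lambda>p. (p x y)^2) PL)"
    unfolding PL_def by (simp add: sq_pair distrib_right add.assoc)
  finally show ?thesis .
qed

lemma s1_sos: "sos2_deg 7 (\<lambda>x y. f1 x y * (Theta1 x y)^2)"
  unfolding sos2_deg_def
proof (intro exI[where x="length PL"] exI[where x="\<lambda>j. PL ! j"] conjI)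
  show "\<forall>j<length PL. poly2_deg 7 (PL ! j)" using PL_deg by (simp add: nth_mem)
  show "\<forall>x y. f1 x y * (Theta1 x y)^2 = (\<Sum>j<length PL. ((PL ! j) x y)^2)"
    unfolding s1_sum by (simp add: sum_list_sum_nth lessThan_atLeast0)
qed

lemma s2_sos: "sos2_deg 7 (\<lambda>x z. f2 x z * (Theta2 x z)^2)"
  unfolding sos2_deg_def
proof (intro exI[where x="1::nat"] exI[where x="\<lambda>j x z. x * z * (x^2+z^2+1) * (x^2+1)"] conjI allI impI)
  show "poly2_deg 7 (\<lambda>x z. x * z * (x^2+z^2+1) * (x^2+1))"
    apply (rule poly2_deg_cong[where q="\<lambda>x y. 1 * x ^ 5 * y ^ 1 + 1 * x ^ 3 * y ^ 3 + 2 * x ^ 3 * y ^ 1 + 1 * x ^ 1 * y ^ 3 + 1 * x ^ 1 * y ^ 1"])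
     apply algebra
    by (intro poly2_deg_add poly2_deg_mon; simp)
  fix x z :: real
  show "f2 x z * (Theta2 x z)^2 = (\<Sum>j<(1::nat). (x * z * (x^2+z^2+1) * (x^2+1))^2)"
    unfolding f2_def Theta2_def by (simp add: power_mult_distrib card_lessThan)
qed

lemma Theta1_pos: "Theta1 x y > 0"
  unfolding Theta1_def by (intro mult_pos_pos) (auto intro: add_nonneg_pos add_pos_nonneg)

lemma Theta2_pos: "Theta2 x y > 0"
  unfolding Theta2_def by (intro mult_pos_pos) (auto intro: add_nonneg_pos add_pos_nonneg)

lemma part3: "\<exists>s1 s2. sos2_deg 7 s1 \<and> sos2_deg 7 s2 \<and>
            (\<forall>x1 x2 x3. f x1 x2 x3 = s1 x1 x2 / (Theta1 x1 x2)^2 + s2 x1 x3 / (Theta2 x1 x3)^2)"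
proof (intro exI conjI allI)
  show "sos2_deg 7 (\<lambda>x y. f1 x y * (Theta1 x y)^2)" by (rule s1_sos)
  show "sos2_deg 7 (\<lambda>x z. f2 x z * (Theta2 x z)^2)" by (rule s2_sos)
  fix x1 x2 x3
  show "f x1 x2 x3 = f1 x1 x2 * (Theta1 x1 x2)^2 / (Theta1 x1 x2)^2 + f2 x1 x3 * (Theta2 x1 x3)^2 / (Theta2 x1 x3)^2"
    using Theta1_pos[of x1 x2] Theta2_pos[of x1 x3] by (simp add: f_def)
qed

lemma part1: "f x1 x2 x3 \<ge> 0"
proof -
  have "f1 x1 x2 * (Theta1 x1 x2)^2 \<ge> 0" unfolding s1_sum by (rule sum_list_nonneg) auto
  then have "f1 x1 x2 \<ge> 0" using Theta1_pos[of x1 x2] by (simp add: zero_le_mult_iff)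
  then show ?thesis by (simp add: f_def f2_def)
qed



lemma sq_coeff_top:
  fixes Q :: "real poly"
  assumes "degree Q \<le> D"
  shows "coeff (Q * Q) (2 * D) = (coeff Q D)^2"
proof (cases "degree Q = D")
  case True
  then show ?thesis using coeff_mult_degree_sum[of Q Q] by (simp add: power2_eq_square mult_2)
next
  case False
  then have lt: "degree Q < D" using assms by simp
  have "degree (Q * Q) < 2 * D"
    using degree_mult_le[of Q Q] lt by linarith
  then have "coeff (Q * Q) (2 * D) = 0" by (simp add: coeff_eq_0)
  moreover have "coeff Q D = 0" using lt by (simp add: coeff_eq_0)
  ultimately show ?thesis by simp
qed

lemma sos_degree:
  fixes Q :: "nat \<Rightarrow> real poly"
  assumes deg: "degree (\<Sum>j<m. Q j * Q j) \<le> 2 * d" and j: "j < m"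
  shows "degree (Q j) \<le> d"
proof (rule ccontr)
  assume "\<not> degree (Q j) \<le> d"
  define D where "D = Max ((\<lambda>i. degree (Q i)) ` {..<m})"
  have fin: "finite ((\<lambda>i. degree (Q i)) ` {..<m})" by simp
  have DQ: "degree (Q i) \<le> D" if "i < m" for i
    unfolding D_def using that by (intro Max_ge) auto
  have "D \<in> (\<lambda>i. degree (Q i)) ` {..<m}" unfolding D_def using j by (intro Max_in) auto
  then obtain i where i: "i < m" "degree (Q i) = D" by auto
  have Dd: "D > d" using DQ[OF j] \<open>\<not> degree (Q j) \<le> d\<close> by simp
  then have "Q i \<noteq> 0" using i by auto
  then have lc: "coeff (Q i) D \<noteq> 0" using i by (metis leading_coeff_0_iff)
  have "coeff (\<Sum>j<m. Q j * Q j) (2 * D) = (\<Sum>j<m. (coeff (Q j) D)^2)"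
    by (simp add: coeff_sum sq_coeff_top DQ)
  also have "\<dots> \<ge> (coeff (Q i) D)^2"
    using i by (intro member_le_sum) auto
  finally have "coeff (\<Sum>j<m. Q j * Q j) (2 * D) > 0" using lc
    by (smt (verit) zero_less_power2)
  moreover have "coeff (\<Sum>j<m. Q j * Q j) (2 * D) = 0"
    using deg Dd by (intro coeff_eq_0) linarith
  ultimately show False by simp
qed

lemma bounded_poly_const:
  fixes p :: "real poly"
  assumes "\<And>x. \<bar>poly p x\<bar> \<le> B"
  shows "degree p = 0"
proof (rule ccontr)
  assume "degree p \<noteq> 0"
  then have "filterlim (poly p) at_infinity at_infinity"
    by (intro filterlim_poly_at_infinity) simp
  then have "filterlim (\<lambda>x. norm (poly p x)) at_top at_infinity"
    by (rule filterlim_at_infinity_imp_norm_at_top)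
  then have "\<forall>Z. eventually (\<lambda>x. Z \<le> norm (poly p x)) at_infinity"
    by (simp add: filterlim_at_top)
  then have "eventually (\<lambda>x. norm (poly p x) \<ge> B + 1) at_infinity" by blast
  then obtain r where r: "\<And>x::real. norm x \<ge> r \<Longrightarrow> norm (poly p x) \<ge> B + 1"
    unfolding eventually_at_infinity by blast
  have "norm (poly p \<bar>r\<bar>) \<ge> B + 1" by (intro r) simp
  with assms[of "\<bar>r\<bar>"] show False by simp
qed

lemma deg2_expand:
  fixes p :: "real poly"
  assumes "degree p \<le> 2"
  shows "poly p y = coeff p 0 + coeff p 1 * y + coeff p 2 * y^2"
proof -
  have "poly p y = (\<Sum>i\<le>degree p. coeff p i * y ^ i)" by (rule poly_altdef)
  also have "\<dots> = (\<Sum>i\<le>2. coeff p i * y ^ i)"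
    using assms by (intro sum.mono_neutral_left) (auto simp: coeff_eq_0)
  also have "\<dots> = coeff p 0 + coeff p 1 * y + coeff p 2 * y^2"
    by (simp add: numeral_2_eq_2)
  finally show ?thesis .
qed

lemma quartic_coeffs:
  fixes a0 a1 a2 a3 a4 b0 b1 b2 b3 b4 :: real
  assumes "\<And>y. a0 + a1 * y + a2 * y^2 + a3 * y^3 + a4 * y^4 = b0 + b1 * y + b2 * y^2 + b3 * y^3 + b4 * y^4"
  shows "a0 = b0 \<and> a1 = b1 \<and> a2 = b2 \<and> a3 = b3 \<and> a4 = b4"
proof -
  have e0: "a0 = b0" using assms[of 0] by simp
  have e1: "a0 + a1 + a2 + a3 + a4 = b0 + b1 + b2 + b3 + b4" using assms[of 1] by simp
  have e2: "a0 - a1 + a2 - a3 + a4 = b0 - b1 + b2 - b3 + b4" using assms[of "-1"] by simp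
  have e3: "a0 + 2*a1 + 4*a2 + 8*a3 + 16*a4 = b0 + 2*b1 + 4*b2 + 8*b3 + 16*b4" using assms[of 2] by simp
  have e4: "a0 - 2*a1 + 4*a2 - 8*a3 + 16*a4 = b0 - 2*b1 + 4*b2 - 8*b3 + 16*b4" using assms[of "-2"] by simp
  from e0 e1 e2 e3 e4 show ?thesis by linarith
qed

lemma sum_sq_expand:
  fixes A B C :: "nat \<Rightarrow> real"
  shows "(\<Sum>j<m. (C j + B j * y + A j * y^2)^2) =
    (\<Sum>j<m. C j * C j) + (2 * (\<Sum>j<m. B j * C j)) * y + ((\<Sum>j<m. B j * B j) + 2 * (\<Sum>j<m. A j * C j)) * y^2
    + (2 * (\<Sum>j<m. A j * B j)) * y^3 + (\<Sum>j<m. A j * A j) * y^4"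
proof -
  have "(C j + B j * y + A j * y^2)^2 = C j * C j + (2 * (B j * C j)) * y + ((B j * B j) + 2 * (A j * C j)) * y^2
    + (2 * (A j * B j)) * y^3 + (A j * A j) * y^4" for j
    by algebra
  then show ?thesis
    by (simp add: sum.distrib sum_distrib_left sum_distrib_right ring_distribs)
qed



lemma sos2_nonneg: "sos2 s \<Longrightarrow> s x y \<ge> 0"
  unfolding sos2_def sos2_deg_def by (auto intro!: sum_nonneg)

lemma deg_quartic: "degree [:a, b, c, d, e :: real:] \<le> 4"
  by (auto simp: degree_pCons_eq_if)

lemma sum_restrict:
  fixes h :: "nat \<Rightarrow> real"
  assumes "a \<le> t"
  shows "(\<Sum>b\<le>t. if a + b \<le> t then h b else 0) = (\<Sum>b\<le>t - a. h b)"
proof -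
  have "(\<Sum>b\<le>t. if a + b \<le> t then h b else 0) = (\<Sum>b\<in>{b\<in>{..t}. a + b \<le> t}. h b)"
    by (rule sum.inter_filter[symmetric]) simp
  also have "{b\<in>{..t}. a + b \<le> t} = {..t - a}" using assms by auto
  finally show ?thesis .
qed

lemma part2:
  assumes S1: "sos2 s1" and S2: "sos2 s2"
    and EQ: "\<forall>x1 x2 x3. f x1 x2 x3 = s1 x1 x2 + s2 x1 x3"
  shows False
proof -
  define g where "g x = s2 x 0" for x
  have gnn: "g x \<ge> 0" for x using sos2_nonneg[OF S2] by (simp add: g_def)
  have s1eq: "s1 x y = f1 x y - g x" for x y
    using EQ[rule_format, of x y 0] by (simp add: f_def f2_def g_def)
  obtain t where "sos2_deg t s1" using S1 unfolding sos2_def by blast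
  then obtain m :: nat and ps :: "nat \<Rightarrow> real \<Rightarrow> real \<Rightarrow> real" where pd: "\<forall>j<m. poly2_deg t (ps j)"
    and ss: "\<forall>x y. s1 x y = (\<Sum>j<m. (ps j x y)^2)"
    unfolding sos2_deg_def by auto
  have "\<forall>j. \<exists>c. j < m \<longrightarrow> (\<forall>x y. ps j x y = (\<Sum>a\<le>t. \<Sum>b\<le>t - a. c a b * x ^ a * y ^ b))"
    using pd unfolding poly2_deg_def by blast
  from choice[OF this] obtain cf where cf0: "\<forall>j. j < m \<longrightarrow> (\<forall>x y. ps j x y = (\<Sum>a\<le>t. \<Sum>b\<le>t - a. cf j a b * x ^ a * y ^ b))"
    by blast
  then have cf: "\<And>j x y. j < m \<Longrightarrow> ps j x y = (\<Sum>a\<le>t. \<Sum>b\<le>t - a. cf j a b * x ^ a * y ^ b)"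
    by blast
  define Kp where "Kp j b = (\<Sum>a\<le>t. if a + b \<le> t then monom (cf j a b) a else 0)" for j b
  define Qx where "Qx j x = (\<Sum>b\<le>t. monom (poly (Kp j b) x) b)" for j x
  have polyK: "poly (Kp j b) x = (\<Sum>a\<le>t. if a + b \<le> t then cf j a b * x ^ a else 0)" for j b x
    unfolding Kp_def poly_sum by (intro sum.cong) (auto simp: poly_monom)
  have rep: "ps j x y = poly (Qx j x) y" if "j < m" for j x y
  proof -
    have "poly (Qx j x) y = (\<Sum>b\<le>t. \<Sum>a\<le>t. (if a + b \<le> t then cf j a b * x ^ a * y ^ b else 0))"
      unfolding Qx_def poly_sum poly_monom polyK sum_distrib_right
      by (intro sum.cong) auto
    also have "\<dots> = (\<Sum>a\<le>t. \<Sum>b\<le>t. (if a + b \<le> t then cf j a b * x ^ a * y ^ b else 0))"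
      by (rule sum.swap)
    also have "\<dots> = (\<Sum>a\<le>t. \<Sum>b\<le>t - a. cf j a b * x ^ a * y ^ b)"
      by (rule sum.cong[OF refl]) (simp add: sum_restrict)
    finally show ?thesis using cf[OF that] by simp
  qed
  have coeffQ: "coeff (Qx j x) b = poly (Kp j b) x" for j x b
  proof (cases "b \<le> t")
    case True
    then show ?thesis unfolding Qx_def coeff_sum coeff_monom by (simp add: sum.delta)
  next
    case False
    then have "Kp j b = 0" unfolding Kp_def by (intro sum.neutral) auto
    then show ?thesis using False unfolding Qx_def coeff_sum coeff_monom by (simp add: sum.delta)
  qed
  have Fx: "(\<Sum>j<m. Qx j x * Qx j x) =
     [:8 - g x, 4*x - 8*x^2, 2*x + 10*x^2 + 4*x^3 + 3*x^4, x^2 - 2*x^3, x^2/2:]" for x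
  proof -
    have "poly (\<Sum>j<m. Qx j x * Qx j x) y =
       poly [:8 - g x, 4*x - 8*x^2, 2*x + 10*x^2 + 4*x^3 + 3*x^4, x^2 - 2*x^3, x^2/2:] y" for y
    proof -
      have "poly (\<Sum>j<m. Qx j x * Qx j x) y = (\<Sum>j<m. (ps j x y)^2)"
        unfolding poly_sum poly_mult by (intro sum.cong) (auto simp: rep power2_eq_square)
      also have "\<dots> = f1 x y - g x" using ss s1eq by simp
      also have "\<dots> = poly [:8 - g x, 4*x - 8*x^2, 2*x + 10*x^2 + 4*x^3 + 3*x^4, x^2 - 2*x^3, x^2/2:] y"
        unfolding f1_def by (simp add: algebra_simps power2_eq_square power3_eq_cube power4_eq_xxxx)
      finally show ?thesis .
    qed
    then show ?thesis using poly_eq_poly_eq_iff by blast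
  qed
  have degQ: "degree (Qx j x) \<le> 2" if "j < m" for j x
    by (rule sos_degree[OF _ that]) (simp add: Fx deg_quartic del: pCons_0_0)
  define A where "A j x = poly (Kp j 2) x" for j x
  define B where "B j x = poly (Kp j 1) x" for j x
  define C where "C j x = poly (Kp j 0) x" for j x
  have pt: "ps j x y = C j x + B j x * y + A j x * y^2" if "j < m" for j x y
    using deg2_expand[OF degQ[OF that], of x y] rep[OF that] by (simp add: coeffQ A_def B_def C_def)
  have main: "(\<Sum>j<m. (C j x + B j x * y + A j x * y^2)^2) = f1 x y - g x" for x y
    using ss s1eq pt by simp
  have rel: "(\<Sum>j<m. C j x * C j x) = 8 - g x \<and> 2 * (\<Sum>j<m. B j x * C j x) = 4*x - 8*x^2
     \<and> (\<Sum>j<m. B j x * B j x) + 2 * (\<Sum>j<m. A j x * C j x) = 2*x + 10*x^2 + 4*x^3 + 3*x^4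
     \<and> 2 * (\<Sum>j<m. A j x * B j x) = x^2 - 2*x^3 \<and> (\<Sum>j<m. A j x * A j x) = x^2/2" for x
  proof (rule quartic_coeffs)
    fix y
    show "(\<Sum>j<m. C j x * C j x) + 2 * (\<Sum>j<m. B j x * C j x) * y +
      ((\<Sum>j<m. B j x * B j x) + 2 * (\<Sum>j<m. A j x * C j x)) * y^2 +
      2 * (\<Sum>j<m. A j x * B j x) * y^3 + (\<Sum>j<m. A j x * A j x) * y^4 =
      (8 - g x) + (4*x - 8*x^2) * y + (2*x + 10*x^2 + 4*x^3 + 3*x^4) * y^2 + (x^2 - 2*x^3) * y^3 + x^2/2 * y^4"
      using main[of x y] sum_sq_expand[where A="\<lambda>j. A j x" and B="\<lambda>j. B j x" and C="\<lambda>j. C j x" and y=y and m=m] unfolding f1_def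
      by (simp add: algebra_simps)
  qed
  have rCC: "(\<Sum>j<m. C j x * C j x) = 8 - g x" for x using rel[of x] by blast
  have rBC: "2 * (\<Sum>j<m. B j x * C j x) = 4*x - 8*x^2" for x using rel[of x] by blast
  have rBB: "(\<Sum>j<m. B j x * B j x) + 2 * (\<Sum>j<m. A j x * C j x) = 2*x + 10*x^2 + 4*x^3 + 3*x^4" for x using rel[of x] by blast
  have rAB: "2 * (\<Sum>j<m. A j x * B j x) = x^2 - 2*x^3" for x using rel[of x] by blast
  have rAA: "(\<Sum>j<m. A j x * A j x) = x^2/2" for x using rel[of x] by blast
  define Ap where "Ap j = Kp j 2" for j
  define Bp where "Bp j = Kp j 1" for j
  define Cp where "Cp j = Kp j 0" for j
  have "poly (\<Sum>j<m. Ap j * Ap j) x = poly [:0, 0, 1/2:] x" for x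
    using rAA[of x] by (simp add: poly_sum A_def Ap_def power2_eq_square)
  then have AAeq: "(\<Sum>j<m. Ap j * Ap j) = [:0, 0, 1/2:]" using poly_eq_poly_eq_iff by blast
  have degA: "degree (Ap j) \<le> 1" if "j < m" for j
    by (rule sos_degree[OF _ that]) (simp add: AAeq)
  have A0: "coeff (Ap j) 0 = 0" if "j < m" for j
  proof -
    have "(\<Sum>j<m. (coeff (Ap j) 0)^2) = 0"
      using rAA[of 0] by (simp add: A_def Ap_def poly_0_coeff_0 power2_eq_square)
    then show ?thesis using that by (subst (asm) sum_nonneg_eq_0_iff) auto
  qed
  define \<alpha> where "\<alpha> j = coeff (Ap j) 1" for j
  have Aform: "A j x = \<alpha> j * x" if "j < m" for j x
  proof -
    have "coeff (Ap j) 2 = 0" using degA[OF that] by (intro coeff_eq_0) simp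
    then show ?thesis using deg2_expand[of "Ap j" x] degA[OF that] A0[OF that]
      by (simp add: A_def Ap_def \<alpha>_def)
  qed
  have "\<bar>poly (\<Sum>j<m. Cp j * Cp j) x\<bar> \<le> 8" for x
  proof -
    have "poly (\<Sum>j<m. Cp j * Cp j) x = (\<Sum>j<m. C j x * C j x)"
      by (simp add: poly_sum C_def Cp_def)
    moreover have "(\<Sum>j<m. C j x * C j x) \<ge> 0" by (intro sum_nonneg) simp
    ultimately show ?thesis using rCC[of x] gnn[of x] by simp
  qed
  then have CCeq: "degree (\<Sum>j<m. Cp j * Cp j) = 0" by (rule bounded_poly_const)
  have degC: "degree (Cp j) \<le> 0" if "j < m" for j
    by (rule sos_degree[OF _ that]) (simp add: CCeq)
  define c where "c j = coeff (Cp j) 0" for j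
  have Cform: "C j x = c j" if "j < m" for j x
  proof -
    have "coeff (Cp j) 1 = 0" "coeff (Cp j) 2 = 0" using degC[OF that] by (auto intro: coeff_eq_0)
    then show ?thesis using deg2_expand[of "Cp j" x] degC[OF that]
      by (simp add: C_def Cp_def c_def)
  qed
  have Scc: "(\<Sum>j<m. c j * c j) \<le> 8"
  proof -
    have "(\<Sum>j<m. c j * c j) = (\<Sum>j<m. C j 0 * C j 0)" by (intro sum.cong) (auto simp: Cform)
    then show ?thesis using rCC[of 0] gnn[of 0] by simp
  qed
  define Sac where "Sac = (\<Sum>j<m. \<alpha> j * c j)"
  have SAC: "(\<Sum>j<m. A j x * C j x) = Sac * x" for x
  proof -
    have "(\<Sum>j<m. A j x * C j x) = (\<Sum>j<m. \<alpha> j * c j * x)"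
      by (intro sum.cong) (auto simp: Aform Cform)
    then show ?thesis by (simp add: Sac_def sum_distrib_right)
  qed
  have "poly (\<Sum>j<m. Bp j * Bp j) x = poly [:0, 2 - 2 * Sac, 10, 4, 3:] x" for x
  proof -
    have "poly (\<Sum>j<m. Bp j * Bp j) x = (\<Sum>j<m. B j x * B j x)" by (simp add: poly_sum B_def Bp_def)
    also have "\<dots> = 2*x + 10*x^2 + 4*x^3 + 3*x^4 - 2 * (Sac * x)" using rBB[of x] SAC[of x] by simp
    also have "\<dots> = poly [:0, 2 - 2 * Sac, 10, 4, 3:] x" by (simp add: algebra_simps power2_eq_square power3_eq_cube power4_eq_xxxx)
    finally show ?thesis .
  qed
  then have BBeq: "(\<Sum>j<m. Bp j * Bp j) = [:0, 2 - 2 * Sac, 10, 4, 3:]" using poly_eq_poly_eq_iff by blast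
  have degB: "degree (Bp j) \<le> 2" if "j < m" for j
    by (rule sos_degree[OF _ that]) (simp add: BBeq deg_quartic del: pCons_0_0)
  have B0: "coeff (Bp j) 0 = 0" if "j < m" for j
  proof -
    have "(\<Sum>j<m. (coeff (Bp j) 0)^2) = 0"
      using rBB[of 0] SAC[of 0] by (simp add: B_def Bp_def poly_0_coeff_0 power2_eq_square)
    then show ?thesis using that by (subst (asm) sum_nonneg_eq_0_iff) auto
  qed
  define \<beta> where "\<beta> j = coeff (Bp j) 1" for j
  define \<gamma> where "\<gamma> j = coeff (Bp j) 2" for j
  have Bform: "B j x = \<beta> j * x + \<gamma> j * x^2" if "j < m" for j x
    using deg2_expand[of "Bp j" x] degB[OF that] B0[OF that]
    by (simp add: B_def Bp_def \<beta>_def \<gamma>_def)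
  define aa where "aa = (\<Sum>j<m. \<alpha> j * \<alpha> j)"
  define ab where "ab = (\<Sum>j<m. \<alpha> j * \<beta> j)"
  define ag where "ag = (\<Sum>j<m. \<alpha> j * \<gamma> j)"
  define bb where "bb = (\<Sum>j<m. \<beta> j * \<beta> j)"
  define bg where "bg = (\<Sum>j<m. \<beta> j * \<gamma> j)"
  define gg where "gg = (\<Sum>j<m. \<gamma> j * \<gamma> j)"
  define bc where "bc = (\<Sum>j<m. \<beta> j * c j)"
  define gc where "gc = (\<Sum>j<m. \<gamma> j * c j)"
  define cc where "cc = (\<Sum>j<m. c j * c j)"
  have SAA: "(\<Sum>j<m. A j x * A j x) = aa * x^2" for x
  proof -
    have "(\<Sum>j<m. A j x * A j x) = (\<Sum>j<m. \<alpha> j * \<alpha> j * x^2)"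
      by (intro sum.cong) (auto simp: Aform power2_eq_square)
    then show ?thesis by (simp add: aa_def sum_distrib_right)
  qed
  have SAB: "(\<Sum>j<m. A j x * B j x) = ab * x^2 + ag * x^3" for x
  proof -
    have "(\<Sum>j<m. A j x * B j x) = (\<Sum>j<m. \<alpha> j * \<beta> j * x^2 + \<alpha> j * \<gamma> j * x^3)"
      by (intro sum.cong) (auto simp: Aform Bform algebra_simps power2_eq_square power3_eq_cube)
    then show ?thesis by (simp add: ab_def ag_def sum.distrib sum_distrib_right)
  qed
  have SBB: "(\<Sum>j<m. B j x * B j x) = bb * x^2 + 2 * bg * x^3 + gg * x^4" for x
  proof -
    have "(\<Sum>j<m. B j x * B j x) = (\<Sum>j<m. \<beta> j * \<beta> j * x^2 + 2 * (\<beta> j * \<gamma> j) * x^3 + \<gamma> j * \<gamma> j * x^4)"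
      by (intro sum.cong) (auto simp: Bform algebra_simps power2_eq_square power3_eq_cube power4_eq_xxxx)
    then show ?thesis by (simp add: bb_def bg_def gg_def sum.distrib sum_distrib_right sum_distrib_left mult.assoc)
  qed
  have SBC: "(\<Sum>j<m. B j x * C j x) = bc * x + gc * x^2" for x
  proof -
    have "(\<Sum>j<m. B j x * C j x) = (\<Sum>j<m. \<beta> j * c j * x + \<gamma> j * c j * x^2)"
      by (intro sum.cong) (auto simp: Bform Cform algebra_simps)
    then show ?thesis by (simp add: bc_def gc_def sum.distrib sum_distrib_right)
  qed
  have e_aa: "aa = 1/2" using rAA[of 1] SAA[of 1] by simp
  have e_ab: "ab = 1/2" and e_ag: "ag = -1"
    using rAB[of 1] SAB[of 1] rAB[of "-1"] SAB[of "-1"] by simp_all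
  have e_ac: "Sac = 1" and e_bb: "bb = 10" and e_bg: "bg = 2" and e_gg: "gg = 3"
  proof -
    have r1: "bb + 2 * bg + gg + 2 * Sac = 19" using rBB[of 1] SBB[of 1] SAC[of 1] by simp
    have r2: "bb - 2 * bg + gg - 2 * Sac = 7" using rBB[of "-1"] SBB[of "-1"] SAC[of "-1"] by simp
    have r3: "4 * bb + 16 * bg + 16 * gg + 4 * Sac = 124" using rBB[of 2] SBB[of 2] SAC[of 2] by simp
    have r4: "4 * bb - 16 * bg + 16 * gg - 4 * Sac = 52" using rBB[of "-2"] SBB[of "-2"] SAC[of "-2"] by simp
    from r1 r2 r3 r4 show "Sac = 1" "bb = 10" "bg = 2" "gg = 3" by linarith+
  qed
  have e_bc: "bc = 2" and e_gc: "gc = -4"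
    using rBC[of 1] SBC[of 1] rBC[of "-1"] SBC[of "-1"] by simp_all
  have cc8: "cc \<le> 8" using Scc by (simp add: cc_def)
  have "0 \<le> (\<Sum>j<m. (100 * \<alpha> j - 14 * \<beta> j + 44 * \<gamma> j + c j)^2)"
    by (intro sum_nonneg) simp
  also have "(\<Sum>j<m. (100 * \<alpha> j - 14 * \<beta> j + 44 * \<gamma> j + c j)^2)
     = 10000 * aa + 196 * bb + 1936 * gg + cc - 2800 * ab + 8800 * ag + 200 * Sac - 1232 * bg - 28 * bc + 88 * gc"
  proof -
    have pw: "(100 * \<alpha> j - 14 * \<beta> j + 44 * \<gamma> j + c j)^2 = 10000 * (\<alpha> j * \<alpha> j) + 196 * (\<beta> j * \<beta> j) + 1936 * (\<gamma> j * \<gamma> j) + c j * c j - 2800 * (\<alpha> j * \<beta> j) + 8800 * (\<alpha> j * \<gamma> j) + 200 * (\<alpha> j * c j) - 1232 * (\<beta> j * \<gamma> j) - 28 * (\<beta> j * c j) + 88 * (\<gamma> j * c j)" for j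
      by algebra
    show ?thesis
      unfolding aa_def bb_def gg_def cc_def ab_def ag_def Sac_def bg_def bc_def gc_def
      by (simp only: pw sum.distrib sum_subtractf sum_distrib_left[symmetric])
  qed
  finally show False using e_aa e_ab e_ag e_ac e_bb e_bg e_gg e_bc e_gc cc8 by linarith
qed


theorem mainTheorem9:
  shows "(\<forall>x1 x2 x3. f x1 x2 x3 \<ge> 0)
    \<and> \<not> (\<exists>s1 s2. sos2 s1 \<and> sos2 s2 \<and>
            (\<forall>x1 x2 x3. f x1 x2 x3 = s1 x1 x2 + s2 x1 x3))
    \<and> (\<exists>s1 s2. sos2_deg 7 s1 \<and> sos2_deg 7 s2 \<and>
            (\<forall>x1 x2 x3. f x1 x2 x3 = s1 x1 x2 / (Theta1 x1 x2)^2 + s2 x1 x3 / (Theta2 x1 x3)^2))"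
proof (intro conjI)
  show "\<forall>x1 x2 x3. f x1 x2 x3 \<ge> 0" using part1 by blast
  show "\<not> (\<exists>s1 s2. sos2 s1 \<and> sos2 s2 \<and> (\<forall>x1 x2 x3. f x1 x2 x3 = s1 x1 x2 + s2 x1 x3))"
    using part2 by blast
  show "\<exists>s1 s2. sos2_deg 7 s1 \<and> sos2_deg 7 s2 \<and>
            (\<forall>x1 x2 x3. f x1 x2 x3 = s1 x1 x2 / (Theta1 x1 x2)^2 + s2 x1 x3 / (Theta2 x1 x3)^2)"
    by (rule part3)
qed

end
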